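(* Let $\Gamma(V,d,c)$ be a coherent cost-geometry with $|V|=n$, positive scale costs $c_k$ and coherence constants $\gamma,\alpha$, and let $\theta>0$. Define $$\Lambda_\theta=\max_{k_\theta\le k\le K}\left[\frac{\log p_k}{c_k}\left(1-\frac{\theta\log\log n}{\log p_k}\right)\right],\qquad B^-_\theta=g(\Lambda_\theta).$$ Then for $B\le B^-_\theta$, a random graph drawn from the product measure $G(n,\mathbf{Q}^*(B))$ has $O(n\log^{\theta+1}(n))$ edges with high probability.
   Context: Geometry $(V,d)$: finite $V$, $|V|=n$, $d$ symmetric, nonnegative, $d(x,y)=0$ iff $x=y$. For $\gamma>1$, $K=\lceil\log_\gamma n\rceil$, $P_k(v)=\#\{u: d(v,u)\in(\gamma^{k-1},\gamma^k]\}$; $(V,d)$ is $\gamma$-coherent if (H1) there are $A>1,\alpha>0$ with $\alpha\gamma^k\le P_k(v)\le A\gamma^k$ for all $v$, $k\in[K]$, and (H2) there are $\phi>0$, $0<\lambda<1$ with $|\{u: d(v,u)\le\gamma^{k_{vt}},\ d(u,t)\le\lambda d(v,t)\}|\ge\phi\gamma^{k_{vt}}$ for all $v\ne t$, where $d(v,t)\in(\gamma^{k_{vt}-1},\gamma^{k_{vt}}]$. A coherent cost-geometry additionally has a cost $c_k>0$ on every pair at distance in $(\gamma^{k-1},\gamma^k]$. Notation: $P_k=\frac12\sum_vP_k(v)$, $p_k=P_k/n$; $g(\lambda)=\sum_{k=1}^Kc_kp_k/(1+e^{\lambda c_k})$ for $\lambda\ge0$; $\bar B=g(0)$; $\lambda(B)=g^{-1}(B)$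 for $0<B\le\bar B$, $\lambda(B)=0$ for $B\ge\bar B$; $\mathbf{Q}^*(B)$ has entry $1/(1+\exp(\lambda(B)c_k))$ for every pair of scale $k$; $G(n,\mathbf{Q})$ includes each pair $\{i,j\}$ independently with probability $Q_{ij}$. $k_\theta=\frac{\theta\log\log n-\log\alpha}{\log\gamma}$. "With high probability" means probability $\to1$ as $n\to\infty$. *)

theory Defs
  imports "HOL-Probability.Probability"
begin

(* Vertex set V = {..<n}; d :: nat => nat => real the dissimilarity; gam = gamma. *)

definition semimetric :: "nat \<Rightarrow> (nat \<Rightarrow> nat \<Rightarrow> real) \<Rightarrow> bool" where
  "semimetric n d \<longleftrightarrow> (\<forall>x<n. \<forall>y<n. d x y = d y x \<and> 0 \<le> d x y \<and> (d x y = 0 \<longleftrightarrow> x = y))"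

definition Kmax :: "real \<Rightarrow> nat \<Rightarrow> nat" where
  "Kmax gam n = nat \<lceil>log gam (real n)\<rceil>"

(* the integer scale k with x in (gam^(k-1), gam^k], for x > 0 *)
definition scale :: "real \<Rightarrow> real \<Rightarrow> int" where
  "scale gam x = \<lceil>log gam x\<rceil>"

definition Pkv :: "real \<Rightarrow> nat \<Rightarrow> (nat \<Rightarrow> nat \<Rightarrow> real) \<Rightarrow> nat \<Rightarrow> nat \<Rightarrow> nat" where
  "Pkv gam n d k v = card {u. u < n \<and> gam ^ (k - 1) < d v u \<and> d v u \<le> gam ^ k}"

definition Pk :: "real \<Rightarrow> nat \<Rightarrow> (nat \<Rightarrow> nat \<Rightarrow> real) \<Rightarrow> nat \<Rightarrow> real" where
  "Pk gam n d k = (1/2) * (\<Sum>v<n. real (Pkv gam n d k v))"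

definition pk :: "real \<Rightarrow> nat \<Rightarrow> (nat \<Rightarrow> nat \<Rightarrow> real) \<Rightarrow> nat \<Rightarrow> real" where
  "pk gam n d k = Pk gam n d k / real n"

definition coherent :: "real \<Rightarrow> real \<Rightarrow> real \<Rightarrow> real \<Rightarrow> real \<Rightarrow> nat \<Rightarrow> (nat \<Rightarrow> nat \<Rightarrow> real) \<Rightarrow> bool" where
  "coherent gam alpha A phi lam n d \<longleftrightarrow>
     gam > 1 \<and> A > 1 \<and> alpha > 0 \<and> phi > 0 \<and> 0 < lam \<and> lam < 1 \<and>
     (\<forall>v<n. \<forall>k\<in>{1..Kmax gam n}.
        alpha * gam ^ k \<le> real (Pkv gam n d k v) \<and> real (Pkv gam n d k v) \<le> A * gam ^ k) \<and>
     (\<forall>v<n. \<forall>t<n. v \<noteq> t \<longrightarrow>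
        real (card {u. u < n \<and> d v u \<le> gam powr (of_int (scale gam (d v t)))
                            \<and> d u t \<le> lam * d v t})
          \<ge> phi * gam powr (of_int (scale gam (d v t))))"

definition coherent_cost_geometry ::
  "real \<Rightarrow> real \<Rightarrow> real \<Rightarrow> real \<Rightarrow> real \<Rightarrow> nat \<Rightarrow> (nat \<Rightarrow> nat \<Rightarrow> real) \<Rightarrow> (nat \<Rightarrow> real) \<Rightarrow> bool" where
  "coherent_cost_geometry gam alpha A phi lam n d c \<longleftrightarrow>
     semimetric n d \<and> coherent gam alpha A phi lam n d \<and>
     (\<forall>x<n. \<forall>y<n. x \<noteq> y \<longrightarrow> 1 \<le> scale gam (d x y) \<and> scale gam (d x y) \<le> int (Kmax gam n)) \<and>
     (\<forall>k\<in>{1..Kmax gam n}. c k > 0)"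

definition gfun :: "real \<Rightarrow> nat \<Rightarrow> (nat \<Rightarrow> nat \<Rightarrow> real) \<Rightarrow> (nat \<Rightarrow> real) \<Rightarrow> real \<Rightarrow> real" where
  "gfun gam n d c l = (\<Sum>k=1..Kmax gam n. c k * pk gam n d k / (1 + exp (l * c k)))"

definition Bbar :: "real \<Rightarrow> nat \<Rightarrow> (nat \<Rightarrow> nat \<Rightarrow> real) \<Rightarrow> (nat \<Rightarrow> real) \<Rightarrow> real" where
  "Bbar gam n d c = gfun gam n d c 0"

definition lam_of :: "real \<Rightarrow> nat \<Rightarrow> (nat \<Rightarrow> nat \<Rightarrow> real) \<Rightarrow> (nat \<Rightarrow> real) \<Rightarrow> real \<Rightarrow> real" where
  "lam_of gam n d c B =
     (if 0 < B \<and> B \<le> Bbar gam n d c then (THE l. 0 \<le> l \<and> gfun gam n d c l = B) else 0)"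

definition Qstar :: "real \<Rightarrow> nat \<Rightarrow> (nat \<Rightarrow> nat \<Rightarrow> real) \<Rightarrow> (nat \<Rightarrow> real) \<Rightarrow> real \<Rightarrow> nat \<times> nat \<Rightarrow> real" where
  "Qstar gam n d c B = (\<lambda>(i, j). 1 / (1 + exp (lam_of gam n d c B * c (nat (scale gam (d i j))))))"

(* unordered pairs {i,j} of V = {..<n}, represented as (i,j) with i < j *)
definition pairs :: "nat \<Rightarrow> (nat \<times> nat) set" where
  "pairs n = {(i, j). i < j \<and> j < n}"

(* G(n,Q): each pair included independently with probability Q; a graph is its edge indicator *)
definition random_graph :: "nat \<Rightarrow> (nat \<times> nat \<Rightarrow> real) \<Rightarrow> (nat \<times> nat \<Rightarrow> bool) pmf" where
  "random_graph n Q = Pi_pmf (pairs n) False (\<lambda>e. bernoulli_pmf (Q e))"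

definition num_edges :: "nat \<Rightarrow> (nat \<times> nat \<Rightarrow> bool) \<Rightarrow> nat" where
  "num_edges n X = card {e \<in> pairs n. X e}"

definition k_theta :: "real \<Rightarrow> real \<Rightarrow> real \<Rightarrow> nat \<Rightarrow> real" where
  "k_theta gam alpha theta n = (theta * ln (ln (real n)) - ln alpha) / ln gam"

definition Lambda_theta :: "real \<Rightarrow> real \<Rightarrow> real \<Rightarrow> nat \<Rightarrow> (nat \<Rightarrow> nat \<Rightarrow> real) \<Rightarrow> (nat \<Rightarrow> real) \<Rightarrow> real" where
  "Lambda_theta gam alpha theta n d c =
     Max {(ln (pk gam n d k) / c k) * (1 - theta * ln (ln (real n)) / ln (pk gam n d k)) | k.
            k \<in> {1..Kmax gam n} \<and> k_theta gam alpha theta n \<le> real k}"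

definition B_minus :: "real \<Rightarrow> real \<Rightarrow> real \<Rightarrow> nat \<Rightarrow> (nat \<Rightarrow> nat \<Rightarrow> real) \<Rightarrow> (nat \<Rightarrow> real) \<Rightarrow> real" where
  "B_minus gam alpha theta n d c = gfun gam n d c (Lambda_theta gam alpha theta n d c)"

end

theory Submission
  imports Defs "HOL-Real_Asymp.Real_Asymp"
begin


lemma scale_char:
  assumes g: "gam > 1" and x: "x > 0" and k: "k \<ge> 1"
  shows "scale gam x = int k \<longleftrightarrow> gam ^ (k - 1) < x \<and> x \<le> gam ^ k"
proof -
  have e: "real_of_int (int k) - 1 = real (k - 1)" using k by simp
  have "scale gam x = int k \<longleftrightarrow> real (k-1) < log gam x \<and> log gam x \<le> real k"
    unfolding scale_def ceiling_eq_iff e by simp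
  also have "\<dots> \<longleftrightarrow> gam powr real (k-1) < x \<and> x \<le> gam powr real k"
    using g x by (simp add: less_log_iff log_le_iff)
  also have "\<dots> \<longleftrightarrow> gam ^ (k - 1) < x \<and> x \<le> gam ^ k"
    using g by (simp add: powr_realpow)
  finally show ?thesis .
qed

lemma ccg_facts:
  assumes "coherent_cost_geometry gam alpha A phi lam n d c"
  shows "gam > 1" "A > 1" "alpha > 0"
    "\<And>v k. v < n \<Longrightarrow> k \<in> {1..Kmax gam n} \<Longrightarrow> alpha * gam ^ k \<le> real (Pkv gam n d k v) \<and> real (Pkv gam n d k v) \<le> A * gam ^ k"
    "\<And>x y. x < n \<Longrightarrow> y < n \<Longrightarrow> d x y = d y x \<and> 0 \<le> d x y \<and> (d x y = 0 \<longleftrightarrow> x = y)"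
    "\<And>x y. x < n \<Longrightarrow> y < n \<Longrightarrow> x \<noteq> y \<Longrightarrow> 1 \<le> scale gam (d x y) \<and> scale gam (d x y) \<le> int (Kmax gam n)"
    "\<And>k. k \<in> {1..Kmax gam n} \<Longrightarrow> c k > 0"
  using assms unfolding coherent_cost_geometry_def coherent_def semimetric_def by blast+

lemma vertex_sum:
  fixes F :: "nat \<Rightarrow> real"
  assumes ccg: "coherent_cost_geometry gam alpha A phi lam n d c" and v: "v < n"
  shows "(\<Sum>j\<in>{..<n}-{v}. F (nat (scale gam (d v j)))) = (\<Sum>k=1..Kmax gam n. real (Pkv gam n d k v) * F k)"
proof -
  note f = ccg_facts[OF ccg]
  define S where "S = {..<n}-{v}"
  define g where "g = (\<lambda>j. nat (scale gam (d v j)))"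
  have sub: "g ` S \<subseteq> {1..Kmax gam n}"
  proof
    fix y assume "y \<in> g ` S"
    then obtain j where j: "j \<in> S" "y = g j" by auto
    with f(6)[of v j] v show "y \<in> {1..Kmax gam n}" by (auto simp: S_def g_def)
  qed
  have "(\<Sum>j\<in>S. F (g j)) = (\<Sum>k\<in>{1..Kmax gam n}. \<Sum>j\<in>{j\<in>S. g j = k}. F (g j))"
    by (rule sum.group[symmetric]) (use sub in \<open>auto simp: S_def\<close>)
  also have "\<dots> = (\<Sum>k\<in>{1..Kmax gam n}. real (Pkv gam n d k v) * F k)"
  proof (rule sum.cong[OF refl])
    fix k assume k: "k \<in> {1..Kmax gam n}"
    have set: "{j\<in>S. g j = k} = {u. u < n \<and> gam ^ (k - 1) < d v u \<and> d v u \<le> gam ^ k}"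
    proof (rule set_eqI, rule iffI)
      fix u assume u: "u \<in> {j\<in>S. g j = k}"
      then have un: "u < n" "u \<noteq> v" by (auto simp: S_def)
      have dp: "d v u > 0" using f(5)[OF v un(1)] un(2) by auto
      have s1: "1 \<le> scale gam (d v u)" using f(6)[OF v un(1)] un(2) by auto
      have "scale gam (d v u) = int k" using u s1 by (auto simp: g_def)
      with scale_char[OF f(1) dp] k un show "u \<in> {u. u < n \<and> gam ^ (k - 1) < d v u \<and> d v u \<le> gam ^ k}" by auto
    next
      fix u assume u: "u \<in> {u. u < n \<and> gam ^ (k - 1) < d v u \<and> d v u \<le> gam ^ k}"
      have gp: "gam ^ (k-1) > 0" using f(1) by simp
      have un: "u < n" "u \<noteq> v" using u f(5)[OF v v] gp by auto
      have dp: "d v u > 0" using f(5)[OF v un(1)] un(2) by auto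
      have "scale gam (d v u) = int k" using scale_char[OF f(1) dp] k u by auto
      then show "u \<in> {j\<in>S. g j = k}" using un by (auto simp: S_def g_def)
    qed
    have "(\<Sum>j\<in>{j\<in>S. g j = k}. F (g j)) = (\<Sum>j\<in>{j\<in>S. g j = k}. F k)" by simp
    also have "\<dots> = real (card {j\<in>S. g j = k}) * F k" by simp
    finally show "(\<Sum>j\<in>{j\<in>S. g j = k}. F (g j)) = real (Pkv gam n d k v) * F k"
      by (simp add: set Pkv_def)
  qed
  finally show ?thesis by (simp add: S_def g_def)
qed

lemma pk_bounds:
  assumes ccg: "coherent_cost_geometry gam alpha A phi lam n d c" and n: "n > 0"
    and k: "k \<in> {1..Kmax gam n}"
  shows "alpha * gam ^ k / 2 \<le> pk gam n d k" "pk gam n d k \<le> A * gam ^ k / 2"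
proof -
  note f = ccg_facts[OF ccg]
  have lo: "real n * (alpha * gam ^ k) \<le> (\<Sum>v<n. real (Pkv gam n d k v))"
    using sum_bounded_below[of "{..<n}" "alpha * gam ^ k" "\<lambda>v. real (Pkv gam n d k v)"] f(4)[OF _ k] by auto
  have hi: "(\<Sum>v<n. real (Pkv gam n d k v)) \<le> real n * (A * gam ^ k)"
    using sum_bounded_above[of "{..<n}" "\<lambda>v. real (Pkv gam n d k v)" "A * gam ^ k"] f(4)[OF _ k] by auto
  have e: "pk gam n d k = (\<Sum>v<n. real (Pkv gam n d k v)) / (2 * real n)"
    by (simp add: pk_def Pk_def)
  show "alpha * gam ^ k / 2 \<le> pk gam n d k" unfolding e using lo n
    by (simp add: field_simps)
  show "pk gam n d k \<le> A * gam ^ k / 2" unfolding e using hi n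
    by (simp add: field_simps)
qed

lemma pairs_sum_bound:
  assumes ccg: "coherent_cost_geometry gam alpha A phi lam n d c" and n: "n > 0"
  shows "(\<Sum>e\<in>pairs n. Qstar gam n d c B e)
     \<le> 2 * real n * (\<Sum>k=1..Kmax gam n. pk gam n d k * (1 / (1 + exp (lam_of gam n d c B * c k))))"
proof -
  define q where "q = (\<lambda>k. 1 / (1 + exp (lam_of gam n d c B * c k)))"
  have qn: "q k \<ge> 0" for k unfolding q_def by (simp add: add_pos_pos)
  have Q: "Qstar gam n d c B (i,j) = q (nat (scale gam (d i j)))" for i j
    by (simp add: Qstar_def q_def)
  define S where "S = Sigma {..<n} (\<lambda>i. {..<n}-{i})"
  have sub: "pairs n \<subseteq> S" by (auto simp: pairs_def S_def)
  have "(\<Sum>e\<in>pairs n. Qstar gam n d c B e) \<le> (\<Sum>e\<in>S. Qstar gam n d c B e)"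
    by (rule sum_mono2) (auto simp: S_def Q qn sub pairs_def)
  also have "\<dots> = (\<Sum>i<n. \<Sum>j\<in>{..<n}-{i}. q (nat (scale gam (d i j))))"
  proof -
    have "Qstar gam n d c B = (\<lambda>(i,j). q (nat (scale gam (d i j))))" by (auto simp: fun_eq_iff Q)
    then show ?thesis unfolding S_def by (simp add: sum.Sigma)
  qed
  also have "\<dots> = (\<Sum>i<n. \<Sum>k=1..Kmax gam n. real (Pkv gam n d k i) * q k)"
    by (rule sum.cong[OF refl]) (rule vertex_sum[OF ccg], simp)
  also have "\<dots> = (\<Sum>k=1..Kmax gam n. (\<Sum>i<n. real (Pkv gam n d k i)) * q k)"
    by (subst sum.swap) (simp add: sum_distrib_right)
  also have "\<dots> = (\<Sum>k=1..Kmax gam n. 2 * real n * (pk gam n d k * q k))"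
    using n by (intro sum.cong refl) (simp add: pk_def Pk_def field_simps)
  also have "\<dots> = 2 * real n * (\<Sum>k=1..Kmax gam n. pk gam n d k * q k)"
    by (simp add: sum_distrib_left)
  finally show ?thesis by (simp add: q_def)
qed

lemma Kmax_ge1:
  assumes g: "gam > 1" and n: "n \<ge> 2"
  shows "Kmax gam n \<ge> 1"
proof -
  have "log gam (real n) > 0" using g n by (simp add: zero_less_log_cancel_iff)
  then have "\<lceil>log gam (real n)\<rceil> \<ge> 1" by (simp add: ceiling_le_iff le_ceiling_iff)
  then show ?thesis unfolding Kmax_def by linarith
qed

locale gctx =
  fixes gam alpha A phi lam :: real and n :: nat and d :: "nat \<Rightarrow> nat \<Rightarrow> real" and c :: "nat \<Rightarrow> real"
  assumes ccg: "coherent_cost_geometry gam alpha A phi lam n d c" and n2: "n \<ge> 2"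
begin

lemmas f = ccg_facts[OF ccg]

lemma K1: "Kmax gam n \<ge> 1" using Kmax_ge1[OF f(1) n2] .

lemma pkpos: "k \<in> {1..Kmax gam n} \<Longrightarrow> pk gam n d k > 0"
proof -
  assume k: "k \<in> {1..Kmax gam n}"
  have "0 < alpha * gam ^ k / 2" using f(1,3) by simp
  also have "\<dots> \<le> pk gam n d k" using pk_bounds(1)[OF ccg _ k] n2 by simp
  finally show ?thesis .
qed

lemma g_strict:
  assumes l: "l1 < l2"
  shows "gfun gam n d c l2 < gfun gam n d c l1"
  unfolding gfun_def
proof (rule sum_strict_mono_ex1)
  have t: "c k * pk gam n d k / (1 + exp (l2 * c k)) < c k * pk gam n d k / (1 + exp (l1 * c k))"
    if k: "k \<in> {1..Kmax gam n}" for k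
  proof -
    have "l1 * c k < l2 * c k" using l f(7)[OF k] by simp
    then have "exp (l1 * c k) < exp (l2 * c k)" by simp
    moreover have "c k * pk gam n d k > 0" using f(7)[OF k] pkpos[OF k] by simp
    ultimately show ?thesis
      by (intro divide_strict_left_mono) (auto simp: add_pos_pos)
  qed
  show "\<forall>x\<in>{1..Kmax gam n}. c x * pk gam n d x / (1 + exp (l2 * c x)) \<le> c x * pk gam n d x / (1 + exp (l1 * c x))"
    using t by (auto intro: less_imp_le)
  show "\<exists>a\<in>{1..Kmax gam n}. c a * pk gam n d a / (1 + exp (l2 * c a)) < c a * pk gam n d a / (1 + exp (l1 * c a))"
    using t K1 by auto
qed simp

lemma g_anti: "l1 \<le> l2 \<Longrightarrow> gfun gam n d c l2 \<le> gfun gam n d c l1"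
  using g_strict by (cases "l1 = l2") (auto intro: less_imp_le)

lemma g_cont: "continuous_on S (gfun gam n d c)"
  unfolding gfun_def
  by (intro continuous_intros) (auto simp: add_pos_pos intro!: order.strict_implies_not_eq[symmetric])

lemma g_small:
  assumes l: "l > 0"
  shows "gfun gam n d c l \<le> (\<Sum>k=1..Kmax gam n. pk gam n d k) / l"
  unfolding gfun_def sum_divide_distrib
proof (rule sum_mono)
  fix k assume k: "k \<in> {1..Kmax gam n}"
  have ck: "c k > 0" using f(7)[OF k] .
  have p: "pk gam n d k > 0" using pkpos[OF k] .
  have "l * c k < 1 + exp (l * c k)" using exp_ge_add_one_self[of "l * c k"] by linarith
  then have "c k * pk gam n d k / (1 + exp (l * c k)) \<le> c k * pk gam n d k / (l * c k)"
    using ck p l by (intro divide_left_mono) (auto intro!: less_imp_le mult_pos_pos add_pos_pos)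
  also have "\<dots> = pk gam n d k / l" using ck by simp
  finally show "c k * pk gam n d k / (1 + exp (l * c k)) \<le> pk gam n d k / l" .
qed

lemma lam_props:
  assumes B: "0 < B" "B \<le> Bbar gam n d c"
  shows "0 \<le> lam_of gam n d c B \<and> gfun gam n d c (lam_of gam n d c B) = B"
proof -
  define S where "S = (\<Sum>k=1..Kmax gam n. pk gam n d k)"
  have S: "S \<ge> 0" unfolding S_def using pkpos by (intro sum_nonneg) (auto intro: less_imp_le)
  define M where "M = S / B + 1"
  have M: "M > 0" unfolding M_def using S B by (simp add: add_nonneg_pos)
  have "gfun gam n d c M \<le> S / M" using g_small[OF M] by (simp add: S_def)
  also have "S / M < B" using M B S by (simp add: M_def field_simps)
  finally have gM: "gfun gam n d c M \<le> B" by simp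
  have "\<exists>x\<ge>0. x \<le> M \<and> gfun gam n d c x = B"
    by (rule IVT2') (use gM B M g_cont in \<open>auto simp: Bbar_def\<close>)
  then obtain x where x: "0 \<le> x" "gfun gam n d c x = B" by blast
  have ex1: "\<exists>!l. 0 \<le> l \<and> gfun gam n d c l = B"
  proof (rule ex1I[of _ x])
    show "0 \<le> x \<and> gfun gam n d c x = B" using x by simp
    fix y assume y: "0 \<le> y \<and> gfun gam n d c y = B"
    show "y = x"
    proof (rule ccontr)
      assume "y \<noteq> x"
      then have "y < x \<or> x < y" by auto
      then show False using g_strict[of y x] g_strict[of x y] x y by auto
    qed
  qed
  show ?thesis unfolding lam_of_def using B theI'[OF ex1] by simp
qed

lemma lam_ge:
  assumes B: "0 < B" "B \<le> gfun gam n d c L"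
  shows "0 \<le> lam_of gam n d c B \<and> L \<le> lam_of gam n d c B"
proof (cases "B \<le> Bbar gam n d c")
  case True
  note lp = lam_props[OF B(1) True]
  have "L \<le> lam_of gam n d c B"
  proof (rule ccontr)
    assume "\<not> L \<le> lam_of gam n d c B"
    then have "gfun gam n d c L < gfun gam n d c (lam_of gam n d c B)" using g_strict by simp
    then show False using lp B by simp
  qed
  then show ?thesis using lp by simp
next
  case False
  then have l0: "lam_of gam n d c B = 0" by (simp add: lam_of_def)
  have "L < 0"
  proof (rule ccontr)
    assume "\<not> L < 0"
    then have "gfun gam n d c L \<le> gfun gam n d c 0" using g_anti by simp
    then show False using False B by (simp add: Bbar_def)
  qed
  then show ?thesis using l0 by simp
qed

lemma term_bound:
  assumes n3: "n \<ge> 3" and th: "theta > 0"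
    and B: "0 < B" "B \<le> B_minus gam alpha theta n d c"
    and k: "k \<in> {1..Kmax gam n}"
  shows "pk gam n d k * (1 / (1 + exp (lam_of gam n d c B * c k))) \<le> ln (real n) powr theta * (1 + A / alpha)"
proof -
  define l where "l = lam_of gam n d c B"
  define T where "T = ln (real n) powr theta"
  define L where "L = ln (ln (real n))"
  define p where "p = pk gam n d k"
  have lg: "0 \<le> l" "Lambda_theta gam alpha theta n d c \<le> l"
    using lam_ge[OF B(1)] B(2) by (auto simp: l_def B_minus_def)
  have ln1: "ln (real n) \<ge> 1"
  proof -
    have "exp 1 \<le> (3::real)" using exp_le by simp
    also have "\<dots> \<le> real n" using n3 by simp
    finally show ?thesis using ln_ge_iff[of "real n" 1] n3 by simp
  qed
  have TL: "T = exp (theta * L)" unfolding T_def L_def using ln1 by (simp add: powr_def)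
  have T1: "T \<ge> 1" unfolding T_def using ln1 th by (simp add: ge_one_powr_ge_zero)
  have ck: "c k > 0" using f(7)[OF k] .
  have pp: "p > 0" using pkpos[OF k] by (simp add: p_def)
  have q1: "1 / (1 + exp (l * c k)) \<le> 1" using exp_gt_zero[of "l * c k"] by (simp add: divide_le_eq not_less add_nonneg_nonneg less_imp_le)
  have qe: "1 / (1 + exp (l * c k)) \<le> exp (- (l * c k))"
  proof -
    have "1 / (1 + exp (l * c k)) \<le> 1 / exp (l * c k)"
      by (intro divide_left_mono) (auto intro!: mult_pos_pos add_pos_pos)
    then show ?thesis by (simp add: exp_minus field_simps)
  qed
  have Aa: "A / alpha \<ge> 0" using f(2,3) by simp
  show ?thesis
  proof (cases "k_theta gam alpha theta n \<le> real k")
    case False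
    have lg1: "ln gam > 0" using f(1) by simp
    have "real k < (theta * L - ln alpha) / ln gam"
      using False by (simp add: k_theta_def L_def)
    then have "real k * ln gam < theta * L - ln alpha" using lg1 by (simp add: field_simps)
    then have "exp (ln alpha + real k * ln gam) < exp (theta * L)" by simp
    also have "exp (ln alpha + real k * ln gam) = alpha * gam ^ k"
      using f(1,3) by (simp add: exp_add exp_of_nat_mult)
    finally have ag: "alpha * gam ^ k < T" using TL by simp
    have "p * (1 / (1 + exp (l * c k))) \<le> p" using pp q1 by (intro mult_left_le) auto
    also have "\<dots> \<le> A * gam ^ k / 2" using pk_bounds(2)[OF ccg _ k] n2 by (simp add: p_def)
    also have "\<dots> = (A / alpha) * (alpha * gam ^ k) / 2" using f(3) by simp
    also have "\<dots> \<le> (A / alpha) * T"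
    proof -
      have "0 \<le> alpha * gam ^ k" using f(1,3) by simp
      then have "(alpha * gam ^ k) / 2 \<le> T" using ag by simp
      then have "(A / alpha) * ((alpha * gam ^ k) / 2) \<le> (A / alpha) * T" using Aa by (rule mult_left_mono)
      then show ?thesis by simp
    qed
    also have "\<dots> \<le> T * (1 + A / alpha)" using T1 by (simp add: algebra_simps)
    finally show ?thesis by (simp add: l_def p_def T_def)
  next
    case True
    define val where "val = (ln p / c k) * (1 - theta * L / ln p)"
    have fin: "finite {(ln (pk gam n d k) / c k) * (1 - theta * ln (ln (real n)) / ln (pk gam n d k)) | k.
            k \<in> {1..Kmax gam n} \<and> k_theta gam alpha theta n \<le> real k}"
    proof (rule finite_subset)
      show "{(ln (pk gam n d k) / c k) * (1 - theta * ln (ln (real n)) / ln (pk gam n d k)) | k.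
            k \<in> {1..Kmax gam n} \<and> k_theta gam alpha theta n \<le> real k} \<subseteq>
            (\<lambda>k. (ln (pk gam n d k) / c k) * (1 - theta * ln (ln (real n)) / ln (pk gam n d k))) ` {1..Kmax gam n}"
        by auto
    qed simp
    have "val \<le> Lambda_theta gam alpha theta n d c"
      unfolding Lambda_theta_def val_def p_def L_def
      by (rule Max_ge[OF fin]) (use k True in auto)
    with lg have vl: "val \<le> l" by simp
    have "p * (1 / (1 + exp (l * c k))) \<le> T"
    proof (cases "ln p = 0")
      case True
      then have "p = 1" using pp by simp
      then show ?thesis using q1 T1 by simp
    next
      case False
      have "val = (ln p - theta * L) / c k" unfolding val_def using False ck by (simp add: field_simps)
      with vl ck have "ln p - theta * L \<le> l * c k" by (simp add: field_simps)
      then have "exp (ln p - l * c k) \<le> exp (theta * L)" by simp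
      then have "p * exp (- (l * c k)) \<le> T" using pp TL by (simp add: exp_diff exp_minus field_simps)
      moreover have "p * (1 / (1 + exp (l * c k))) \<le> p * exp (- (l * c k))"
        using qe pp by (intro mult_left_mono) auto
      ultimately show ?thesis by linarith
    qed
    also have "\<dots> \<le> T * (1 + A / alpha)"
    proof -
      have T0: "T \<ge> 0" using T1 by simp
      have "0 \<le> T * (A / alpha)" by (rule mult_nonneg_nonneg[OF T0 Aa])
      then show ?thesis by (simp add: distrib_left)
    qed
    finally show ?thesis by (simp add: l_def p_def T_def)
  qed
qed

lemma mu_bound:
  assumes n3: "n \<ge> 3" and ng: "gam \<le> real n" and th: "theta > 0"
    and B: "0 < B" "B \<le> B_minus gam alpha theta n d c"
  shows "(\<Sum>e\<in>pairs n. Qstar gam n d c B e)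
     \<le> (4 * (1 + A / alpha) / ln gam) * real n * ln (real n) powr (theta + 1)"
proof -
  define T where "T = ln (real n) powr theta"
  define K where "K = Kmax gam n"
  have ln1: "ln (real n) \<ge> 1"
  proof -
    have "exp 1 \<le> (3::real)" using exp_le by simp
    also have "\<dots> \<le> real n" using n3 by simp
    finally show ?thesis using ln_ge_iff[of "real n" 1] n3 by simp
  qed
  have T1: "T \<ge> 0" unfolding T_def by simp
  have Aa: "1 + A / alpha \<ge> 0" using f(2,3) by simp
  have lg: "ln gam > 0" using f(1) by simp
  have "(\<Sum>e\<in>pairs n. Qstar gam n d c B e)
     \<le> 2 * real n * (\<Sum>k=1..K. pk gam n d k * (1 / (1 + exp (lam_of gam n d c B * c k))))"
    unfolding K_def using pairs_sum_bound[OF ccg] n3 by simp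
  also have "\<dots> \<le> 2 * real n * (real K * (T * (1 + A / alpha)))"
  proof (rule mult_left_mono)
    show "(\<Sum>k=1..K. pk gam n d k * (1 / (1 + exp (lam_of gam n d c B * c k)))) \<le> real K * (T * (1 + A / alpha))"
      using sum_bounded_above[of "{1..K}" "\<lambda>k. pk gam n d k * (1 / (1 + exp (lam_of gam n d c B * c k)))" "T * (1 + A / alpha)"]
        term_bound[OF n3 th B] unfolding K_def T_def by simp
  qed simp
  also have "\<dots> \<le> 2 * real n * ((2 * ln (real n) / ln gam) * (T * (1 + A / alpha)))"
  proof (intro mult_left_mono mult_right_mono)
    have lgn: "log gam (real n) = ln (real n) / ln gam" by (simp add: log_def)
    have x1: "ln (real n) / ln gam \<ge> 1" using lg ng f(1) by (simp add: le_divide_eq)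
    have "real K = of_int \<lceil>log gam (real n)\<rceil>" unfolding K_def Kmax_def using x1 lgn by simp
    also have "\<dots> \<le> ln (real n) / ln gam + 1" using lgn by linarith
    also have "\<dots> \<le> 2 * ln (real n) / ln gam" using x1 by simp
    finally show "real K \<le> 2 * ln (real n) / ln gam" .
  qed (use T1 Aa in auto)
  also have "\<dots> = (4 * (1 + A / alpha) / ln gam) * real n * (ln (real n) * T)"
    by (simp add: field_simps)
  also have "ln (real n) * T = ln (real n) powr (theta + 1)"
    unfolding T_def using ln1 by (simp add: powr_add)
  finally show ?thesis .
qed

end


lemma pi_bernoulli_tail:
  fixes I :: "'a set" and Q :: "'a \<Rightarrow> real" and eps :: real
  assumes fin: "finite I" and ne: "I \<noteq> {}" and Q: "\<And>e. e\<in>I \<Longrightarrow> 0 \<le> Q e \<and> Q e \<le> 1" and eps: "eps \<ge> 0"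
  shows "measure_pmf.prob (Pi_pmf I False (\<lambda>e. bernoulli_pmf (Q e)))
           {f. (\<Sum>e\<in>I. Q e) + eps \<le> real (card {e\<in>I. f e})} \<le> exp (-2*eps^2 / real (card I))"
proof -
  define P where "P = Pi_pmf I False (\<lambda>e. bernoulli_pmf (Q e))"
  have ex: "measure_pmf.expectation P (\<lambda>f. if f e then 1 else 0 :: real) = Q e" if e: "e \<in> I" for e
  proof -
    have "measure_pmf.expectation P (\<lambda>f. if f e then 1 else 0 :: real) =
        measure_pmf.expectation (map_pmf (\<lambda>f. f e) P) (\<lambda>b. if b then 1 else 0 :: real)"
      by simp
    also have "map_pmf (\<lambda>f. f e) P = bernoulli_pmf (Q e)"
      using e fin by (simp add: P_def Pi_pmf_component)
    also have "measure_pmf.expectation (bernoulli_pmf (Q e)) (\<lambda>b. if b then 1 else 0) = Q e"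
      using Q[OF e] by simp
    finally show ?thesis .
  qed
  interpret H: Hoeffding_ineq "measure_pmf P" I "\<lambda>i f. if f i then 1 else 0" "\<lambda>_. 0" "\<lambda>_. 1"
     "\<Sum>e\<in>I. measure_pmf.expectation P (\<lambda>f. if f e then 1 else 0 :: real)"
  proof unfold_locales
    show "prob_space.indep_vars (measure_pmf P) (\<lambda>_. borel) (\<lambda>i f. if f i then 1 else 0::real) I"
      unfolding P_def
      by (intro prob_space.indep_vars_compose2[OF _ indep_vars_Pi_pmf])
         (auto simp: measure_pmf.prob_space_axioms fin)
  qed (auto simp: fin)
  have s: "(\<Sum>e\<in>I. measure_pmf.expectation P (\<lambda>f. if f e then 1 else 0 :: real)) = (\<Sum>e\<in>I. Q e)"
    using ex by simp
  have c: "(\<Sum>i\<in>I. if f i then 1 else 0 :: real) = real (card {e\<in>I. f e})" for f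
  proof -
    have "(\<Sum>i\<in>I. if f i then 1 else (0::real)) = (\<Sum>i\<in>{e\<in>I. f e}. 1)"
      using fin by (intro sum.mono_neutral_cong_right) auto
    thus ?thesis by simp
  qed
  have pos: "(\<Sum>i\<in>I. ((\<lambda>_. 1::real) i - (\<lambda>_. 0) i)\<^sup>2) = real (card I)" by simp
  have "0 < real (card I)" using fin ne by (simp add: card_gt_0_iff)
  from H.Hoeffding_ineq_ge[OF eps] this
  have "measure_pmf.prob P {f. (\<Sum>e\<in>I. Q e) + eps \<le> real (card {e\<in>I. f e})} \<le> exp (-2*eps^2 / real (card I))"
    unfolding s pos c by simp
  then show ?thesis unfolding P_def .
qed



theorem proposition3:
  fixes gam alpha A phi lam theta :: real
    and d :: "nat \<Rightarrow> nat \<Rightarrow> nat \<Rightarrow> real"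
    and c :: "nat \<Rightarrow> nat \<Rightarrow> real"
    and B :: "nat \<Rightarrow> real"
  assumes geom: "eventually (\<lambda>n. coherent_cost_geometry gam alpha A phi lam n (d n) (c n)) sequentially"
    and theta: "theta > 0"
    and budget: "eventually (\<lambda>n. 0 < B n \<and> B n \<le> B_minus gam alpha theta n (d n) (c n)) sequentially"
  shows "\<exists>C. (\<lambda>n. measure_pmf.prob (random_graph n (Qstar gam n (d n) (c n) (B n)))
               {X. real (num_edges n X) \<le> C * real n * ln (real n) powr (theta + 1)})
             \<longlonglongrightarrow> 1"
proof -
  obtain N0 where N0: "\<And>n. n \<ge> N0 \<Longrightarrow> coherent_cost_geometry gam alpha A phi lam n (d n) (c n)"
    using geom unfolding eventually_sequentially by blast
  obtain N1 where N1: "\<And>n. n \<ge> N1 \<Longrightarrow> 0 < B n \<and> B n \<le> B_minus gam alpha theta n (d n) (c n)"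
    using budget unfolding eventually_sequentially by blast
  note f0 = ccg_facts[OF N0[OF order.refl]]
  define Cp where "Cp = 4 * (1 + A / alpha) / ln gam"
  have Cp: "Cp > 0" unfolding Cp_def using f0(1,2,3) by (simp add: add_pos_nonneg)
  define kap where "kap = 2 * Cp^2"
  have kap: "kap > 0" unfolding kap_def using Cp by simp
  obtain N2 :: nat where N2: "real N2 \<ge> gam" using real_arch_simple by blast
  define Pr where "Pr = (\<lambda>n. measure_pmf.prob (random_graph n (Qstar gam n (d n) (c n) (B n)))
               {X. real (num_edges n X) \<le> (2 * Cp) * real n * ln (real n) powr (theta + 1)})"
  have low: "1 - exp (- kap * ln (real n)) \<le> Pr n" if n: "n \<ge> max (max N0 N1) (max N2 3)" for n
  proof -
    have ccg: "coherent_cost_geometry gam alpha A phi lam n (d n) (c n)" using N0 n by simp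
    have Bn: "0 < B n" "B n \<le> B_minus gam alpha theta n (d n) (c n)" using N1 n by auto
    have n3: "n \<ge> 3" using n by simp
    have ng: "gam \<le> real n"
    proof -
      have "N2 \<le> n" using n by simp
      then have "real N2 \<le> real n" by simp
      then show ?thesis using N2 by linarith
    qed
    interpret gctx gam alpha A phi lam n "d n" "c n" by (rule gctx.intro) (use ccg n3 in auto)
    define Q where "Q = Qstar gam n (d n) (c n) (B n)"
    define mu where "mu = (\<Sum>e\<in>pairs n. Q e)"
    define L where "L = ln (real n) powr (theta + 1)"
    define b where "b = Cp * real n * L"
    have ln1: "ln (real n) \<ge> 1"
    proof -
      have "exp 1 \<le> (3::real)" using exp_le by simp
      also have "\<dots> \<le> real n" using n3 by simp
      finally show ?thesis using ln_ge_iff[of "real n" 1] n3 by simp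
    qed
    have L1: "L \<ge> ln (real n)"
    proof -
      have "ln (real n) powr 1 \<le> ln (real n) powr (theta + 1)"
        using ln1 theta by (intro powr_mono) auto
      then show ?thesis using ln1 by (simp add: L_def)
    qed
    have mub: "mu \<le> b" unfolding mu_def b_def Q_def L_def Cp_def using mu_bound[OF n3 ng theta Bn] .
    have b0: "b \<ge> 0" unfolding b_def using Cp L1 ln1 by simp
    have fin: "finite (pairs n)"
      by (rule finite_subset[of _ "{..<n} \<times> {..<n}"]) (auto simp: pairs_def)
    have ne: "(0, 1) \<in> pairs n" using n3 by (simp add: pairs_def)
    have Qb: "0 \<le> Q e \<and> Q e \<le> 1" for e
    proof -
      obtain i j where e: "e = (i, j)" by fastforce
      show ?thesis unfolding e Q_def Qstar_def
        using exp_gt_zero[of "lam_of gam n (d n) (c n) (B n) * c n (nat (scale gam (d n i j)))"]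
        by (simp add: divide_le_eq not_less add_nonneg_nonneg less_imp_le)
    qed
    have tail: "measure_pmf.prob (random_graph n Q) {f. mu + b \<le> real (card {e\<in>pairs n. f e})}
        \<le> exp (-2*b^2 / real (card (pairs n)))"
      unfolding random_graph_def mu_def
      by (rule pi_bernoulli_tail[of "pairs n" Q b, OF fin _ Qb b0]) (use ne in blast)
    have cardp: "real (card (pairs n)) \<le> real n * real n"
    proof -
      have "card (pairs n) \<le> card ({..<n} \<times> {..<n})"
        by (rule card_mono) (auto simp: pairs_def)
      then show ?thesis by (metis of_nat_le_iff of_nat_mult card_cartesian_product card_lessThan)
    qed
    have cardp0: "real (card (pairs n)) > 0" using fin ne by (auto simp: card_gt_0_iff)
    have "kap * ln (real n) \<le> 2*b^2 / real (card (pairs n))"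
    proof -
      have "ln (real n) \<le> L^2"
      proof -
        have "ln (real n) * 1 \<le> ln (real n) * ln (real n)" using ln1 by (intro mult_left_mono) auto
        also have "\<dots> \<le> L * L" using L1 ln1 by (intro mult_mono) auto
        finally show ?thesis by (simp add: power2_eq_square)
      qed
      then have "kap * ln (real n) \<le> 2 * Cp^2 * L^2" unfolding kap_def using Cp by simp
      also have "\<dots> = 2*b^2 / (real n * real n)" unfolding b_def using n3
        by (simp add: field_simps power2_eq_square)
      also have "\<dots> \<le> 2*b^2 / real (card (pairs n))"
        using cardp cardp0 by (intro divide_left_mono) auto
      finally show ?thesis .
    qed
    then have ex: "exp (-2*b^2 / real (card (pairs n))) \<le> exp (- kap * ln (real n))" by simp
    have sub: "UNIV - {f. mu + b \<le> real (card {e\<in>pairs n. f e})}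
       \<subseteq> {X. real (num_edges n X) \<le> (2 * Cp) * real n * ln (real n) powr (theta + 1)}"
    proof
      fix X assume "X \<in> UNIV - {f. mu + b \<le> real (card {e\<in>pairs n. f e})}"
      then have "real (num_edges n X) < mu + b" by (simp add: num_edges_def)
      also have "mu + b \<le> 2 * b" using mub by simp
      finally show "X \<in> {X. real (num_edges n X) \<le> (2 * Cp) * real n * ln (real n) powr (theta + 1)}"
        by (simp add: b_def L_def)
    qed
    have "1 - exp (- kap * ln (real n)) \<le> 1 - measure_pmf.prob (random_graph n Q) {f. mu + b \<le> real (card {e\<in>pairs n. f e})}"
      using tail ex by linarith
    also have "\<dots> = measure_pmf.prob (random_graph n Q) (UNIV - {f. mu + b \<le> real (card {e\<in>pairs n. f e})})"
      using measure_pmf.prob_compl[of "{f. mu + b \<le> real (card {e\<in>pairs n. f e})}" "random_graph n Q"] by simp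
    also have "\<dots> \<le> Pr n" unfolding Pr_def Q_def
      by (rule measure_pmf.finite_measure_mono[OF sub[unfolded Q_def]]) simp
    finally show ?thesis .
  qed
  have lim: "(\<lambda>n. 1 - exp (- kap * ln (real n))) \<longlonglongrightarrow> 1"
  proof -
    have "(\<lambda>n. exp (- kap * ln (real n))) \<longlonglongrightarrow> 0" using kap by real_asymp
    then show ?thesis using tendsto_diff[OF tendsto_const, of _ 0 sequentially "1::real"] by simp
  qed
  have "Pr \<longlonglongrightarrow> 1"
  proof (rule tendsto_sandwich[OF _ _ lim tendsto_const])
    show "\<forall>\<^sub>F n in sequentially. 1 - exp (- kap * ln (real n)) \<le> Pr n"
      unfolding eventually_sequentially using low by blast
    show "\<forall>\<^sub>F n in sequentially. Pr n \<le> 1"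
      unfolding Pr_def by (simp add: measure_pmf.prob_le_1)
  qed
  then show ?thesis unfolding Pr_def by blast
qed

end
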